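(* Let $M$ be a $C^2$ manifold with a Koszul connection $\nabla$ (on $TM$, extended to tensor fields by the Leibniz rule), and let $A$ be a $C^2$ covariant symmetric tensor field on $M$ of some rank that vanishes at no point of $M$. If $\nabla\big(\mathrm{Sym}(A\otimes A)\big)=0$ everywhere on $M$, then $\nabla A=0$ everywhere on $M$.
   Context: $\mathrm{Sym}$ denotes symmetrization of covariant tensors: $\mathrm{Sym}(C)=\frac1{k!}\sum_{\sigma\in P(k)}\sigma(C)$ with $(\sigma C)(v_1,\dots,v_k)=C(v_{\sigma(1)},\dots,v_{\sigma(k)})$. *)

theory Defs
  imports "HOL-Analysis.Analysis"
begin

text \<open>Local-coordinate model. Points of a chart domain U (open in real^'n).
A covariant tensor field T of rank r is given by its components
T x js = T_x(e_{js!0},...,e_{js!(r-1)}) for index lists js of length r.\<close>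

definition C2_on :: "('a::euclidean_space) set \<Rightarrow> ('a \<Rightarrow> real) \<Rightarrow> bool" where
  "C2_on U f \<longleftrightarrow> (\<exists>Df D2f.
      (\<forall>x\<in>U. (f has_derivative Df x) (at x)) \<and>
      (\<forall>x\<in>U. \<forall>v. ((\<lambda>y. Df y v) has_derivative D2f x v) (at x)) \<and>
      (\<forall>v w. continuous_on U (\<lambda>x. D2f x v w)))"

definition partial_deriv :: "(real^'n \<Rightarrow> real) \<Rightarrow> 'n \<Rightarrow> real^'n \<Rightarrow> real" where
  "partial_deriv f i x = deriv (\<lambda>t. f (x + t *\<^sub>R axis i 1)) 0"

definition tensor_prod :: "nat \<Rightarrow> ('n list \<Rightarrow> real) \<Rightarrow> ('n list \<Rightarrow> real) \<Rightarrow> 'n list \<Rightarrow> real" where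
  "tensor_prod r S T js = S (take r js) * T (drop r js)"

definition perm_idx :: "nat \<Rightarrow> (nat \<Rightarrow> nat) \<Rightarrow> 'n list \<Rightarrow> 'n list" where
  "perm_idx r \<sigma> js = map (\<lambda>i. js ! \<sigma> i) [0..<r]"

definition Sym :: "nat \<Rightarrow> ('n list \<Rightarrow> real) \<Rightarrow> 'n list \<Rightarrow> real" where
  "Sym r C js = (1 / fact r) * (\<Sum>\<sigma>\<in>{\<sigma>. \<sigma> permutes {..<r}}. C (perm_idx r \<sigma> js))"

definition symmetric_tensor :: "nat \<Rightarrow> ('n list \<Rightarrow> real) \<Rightarrow> bool" where
  "symmetric_tensor r C \<longleftrightarrow> (\<forall>js \<sigma>. length js = r \<longrightarrow> \<sigma> permutes {..<r} \<longrightarrow> C (perm_idx r \<sigma> js) = C js)"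

text \<open>Koszul connection in coordinates: nabla_{d_i} d_j = sum_l Gamma x i j l d_l.\<close>
definition cov_deriv :: "(real^'n \<Rightarrow> 'n \<Rightarrow> 'n \<Rightarrow> 'n \<Rightarrow> real) \<Rightarrow> (real^'n \<Rightarrow> 'n list \<Rightarrow> real)
      \<Rightarrow> real^'n \<Rightarrow> 'n \<Rightarrow> 'n list \<Rightarrow> real" where
  "cov_deriv \<Gamma> T x i js = partial_deriv (\<lambda>y. T y js) i x
      - (\<Sum>m<length js. \<Sum>l\<in>UNIV. \<Gamma> x i (js ! m) l * T x (js[m := l]))"

end

theory Submission
  imports Defs "HOL-Combinatorics.Permutations"
begin

definition lenset :: "nat \<Rightarrow> ('n list) set" where "lenset r = {js. length js = r}"

definition ev :: "nat \<Rightarrow> ('n::finite list \<Rightarrow> real) \<Rightarrow> real^'n \<Rightarrow> real" where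
  "ev r T v = (\<Sum>js\<in>lenset r. T js * (\<Prod>p<r. v $ (js!p)))"

definition Dev :: "nat \<Rightarrow> ('n::finite list \<Rightarrow> real) \<Rightarrow> real^'n \<Rightarrow> real^'n \<Rightarrow> real" where
  "Dev r T v w = (\<Sum>js\<in>lenset r. T js * (\<Sum>m<r. w $ (js!m) * (\<Prod>p\<in>{..<r}-{m}. v $ (js!p))))"

lemma finite_lenset[simp]: "finite (lenset r :: ('n::finite) list set)"
  using finite_lists_length_eq[of "UNIV::'n set" r] by (simp add: lenset_def)

lemma ev_deriv: "((\<lambda>t. ev r T (v + t *\<^sub>R w)) has_real_derivative Dev r T v w) (at 0)"
  unfolding ev_def Dev_def
  by (auto intro!: derivative_eq_intros has_field_derivative_prod sum.cong)

lemma ev_sum_deriv: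
  assumes "\<And>js. ((\<lambda>t. T t js) has_real_derivative T' js) (at 0)"
  shows "((\<lambda>t. ev r (T t) v) has_real_derivative ev r T' v) (at 0)"
  unfolding ev_def
  by (auto intro!: derivative_eq_intros assms)

lemma ev_diff: "ev r (\<lambda>js. f js - g js) v = ev r f v - ev r g v"
  unfolding ev_def by (simp add: left_diff_distrib sum_subtractf)

lemma ev_cont: "continuous_on UNIV (ev r T)"
  unfolding ev_def by (auto intro!: continuous_intros)

lemma perm_idx_len[simp]: "length (perm_idx r \<sigma> js) = r"
  by (simp add: perm_idx_def)

lemma perm_idx_nth[simp]: "p < r \<Longrightarrow> perm_idx r \<sigma> js ! p = js ! \<sigma> p"
  by (simp add: perm_idx_def)

lemma ev_perm:
  assumes s: "\<sigma> permutes {..<r}"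
  shows "(\<Sum>js\<in>lenset r. C (perm_idx r \<sigma> js) * (\<Prod>p<r. v $ (js!p))) = ev r C v"
  unfolding ev_def
proof (rule sum.reindex_bij_witness[where i="perm_idx r (inv \<sigma>)" and j="perm_idx r \<sigma>"])
  fix a :: "'a list" assume a: "a \<in> lenset r"
  show "perm_idx r (inv \<sigma>) (perm_idx r \<sigma> a) = a"
    using a s permutes_inverses[OF s] permutes_in_image[OF s] permutes_in_image[OF permutes_inv[OF s]]
    by (auto simp: lenset_def intro!: nth_equalityI)
  show "perm_idx r \<sigma> a \<in> lenset r" by (simp add: lenset_def)
  show "perm_idx r \<sigma> (perm_idx r (inv \<sigma>) a) = a"
    using a s permutes_inverses[OF s] permutes_in_image[OF s] permutes_in_image[OF permutes_inv[OF s]]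
    by (auto simp: lenset_def intro!: nth_equalityI)
  show "perm_idx r (inv \<sigma>) a \<in> lenset r" by (simp add: lenset_def)
  have "(\<Prod>p<r. v $ (perm_idx r \<sigma> a ! p)) = (\<Prod>p<r. v $ (a ! \<sigma> p))"
    by (rule prod.cong) auto
  also have "\<dots> = (\<Prod>p<r. v $ (a ! p))"
    using prod.permute[OF s, of "\<lambda>p. v $ (a ! p)"] by (simp add: comp_def)
  finally show "C (perm_idx r \<sigma> a) * (\<Prod>p<r. v $ (perm_idx r \<sigma> a ! p)) = C (perm_idx r \<sigma> a) * (\<Prod>p<r. v $ (a ! p))"
    by simp
qed

lemma ev_Sym: "ev r (Sym r C) v = ev r C v"
proof -
  have "ev r (Sym r C) v = (1 / fact r) * (\<Sum>\<sigma>\<in>{\<sigma>. \<sigma> permutes {..<r}}. \<Sum>js\<in>lenset r. C (perm_idx r \<sigma> js) * (\<Prod>p<r. v $ (js!p)))"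
    unfolding ev_def Sym_def by (simp add: sum_distrib_left sum_distrib_right sum.swap[of _ "lenset r"] mult.assoc)
  also have "\<dots> = (1 / fact r) * (\<Sum>\<sigma>\<in>{\<sigma>. \<sigma> permutes {..<r}}. ev r C v)"
    by (simp add: ev_perm)
  also have "\<dots> = ev r C v"
    by (simp add: card_permutations)
  finally show ?thesis .
qed

lemma prod_split_add: "(\<Prod>p<k+n. f p) = (\<Prod>p<k. f p) * (\<Prod>p<n. f (k + p)) " for f :: "nat \<Rightarrow> real"
  by (induction n) (auto simp: mult.assoc)

lemma ev_tprod: fixes S T :: "'n::finite list \<Rightarrow> real" shows "ev (2*k) (tensor_prod k S T) v = ev k S v * ev k T v"
proof -
  have "ev k S v * ev k T v = (\<Sum>(xs,ys)\<in>lenset k \<times> lenset k. (S xs * (\<Prod>p<k. v $ (xs!p))) * (T ys * (\<Prod>p<k. v $ (ys!p))))"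
    unfolding ev_def by (simp add: sum_product sum.cartesian_product)
  also have "\<dots> = ev (2*k) (tensor_prod k S T) v"
    unfolding ev_def
  proof (rule sum.reindex_bij_witness[where i="\<lambda>js. (take k js, drop k js)" and j="\<lambda>(xs,ys). xs @ ys"])
    fix a :: "'n list \<times> 'n list" assume a: "a \<in> lenset k \<times> lenset k"
    then show "(take k (case a of (xs, ys) \<Rightarrow> xs @ ys), drop k (case a of (xs, ys) \<Rightarrow> xs @ ys)) = a"
      by (auto simp: lenset_def)
    show "(case a of (xs, ys) \<Rightarrow> xs @ ys) \<in> lenset (2 * k)" using a by (auto simp: lenset_def)
    obtain xs ys where [simp]: "a = (xs, ys)" and l: "length xs = k" "length ys = k" using a by (auto simp: lenset_def)
    have "(\<Prod>p<2*k. v $ ((xs@ys)!p)) = (\<Prod>p<k. v $ (xs!p)) * (\<Prod>p<k. v $ (ys!p))"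
      using prod_split_add[where k=k and n=k and f="\<lambda>p. v $ ((xs@ys)!p)"] l by (simp add: nth_append mult_2)
    then show "tensor_prod k S T (case a of (xs, ys) \<Rightarrow> xs @ ys) * (\<Prod>p<2 * k. v $ ((case a of (xs, ys) \<Rightarrow> xs @ ys) ! p)) =
         (case a of (xs, ys) \<Rightarrow> S xs * (\<Prod>p<k. v $ (xs ! p)) * (T ys * (\<Prod>p<k. v $ (ys ! p))))"
      using l by (simp add: tensor_prod_def)
  next
    fix b :: "'n list" assume "b \<in> lenset (2*k)"
    then show "(case (take k b, drop k b) of (xs, ys) \<Rightarrow> xs @ ys) = b" "(take k b, drop k b) \<in> lenset k \<times> lenset k"
      by (auto simp: lenset_def)
  qed
  finally show ?thesis by simp
qed

lemma prod_remove_m: "m < r \<Longrightarrow> (\<Prod>p<r. f p) = f m * (\<Prod>p\<in>{..<r}-{m}. f p)" for f :: "nat \<Rightarrow> real"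
  by (simp add: prod.remove)

lemma ev_Gamma_m:
  fixes T :: "'n::finite list \<Rightarrow> real"
  assumes m: "m < r"
  shows "(\<Sum>js\<in>lenset r. \<Sum>l\<in>UNIV. G (js!m) l * T (js[m:=l]) * (\<Prod>p<r. v $ (js!p)))
       = (\<Sum>js\<in>lenset r. T js * ((\<chi> l. \<Sum>a\<in>UNIV. G a l * v$a) $ (js!m) * (\<Prod>p\<in>{..<r}-{m}. v $ (js!p))))"
proof -
  let ?g = "\<lambda>(js,l). G (js!m) l * T (js[m:=l]) * (\<Prod>p<r. v $ (js!p))"
  let ?h = "\<lambda>(js,a). G a (js!m) * T js * (v $ a * (\<Prod>p\<in>{..<r}-{m}. v $ (js!p)))"
  let ?j = "\<lambda>(js::'n list,l::'n). (js[m:=l], js!m)"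
  have "(\<Sum>js\<in>lenset r. \<Sum>l\<in>UNIV. G (js!m) l * T (js[m:=l]) * (\<Prod>p<r. v $ (js!p)))
      = sum ?g (lenset r \<times> UNIV)"
    by (simp add: sum.cartesian_product)
  also have "\<dots> = sum ?h (lenset r \<times> UNIV)"
  proof (rule sum.reindex_bij_witness[where i="?j" and j="?j"])
    fix a :: "'n list \<times> 'n" assume "a \<in> lenset r \<times> UNIV"
    then obtain js l where a: "a = (js, l)" and l: "length js = r" by (auto simp: lenset_def)
    show "?j (?j a) = a"
      using m l a by simp
    show "?j a \<in> lenset r \<times> UNIV" using l a by (simp add: lenset_def)
    have "(\<Prod>p<r. v $ (js!p)) = v $ (js!m) * (\<Prod>p\<in>{..<r}-{m}. v $ (js!p))"
      by (rule prod_remove_m[OF m])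
    moreover have "(\<Prod>p\<in>{..<r}-{m}. v $ (js[m:=l]!p)) = (\<Prod>p\<in>{..<r}-{m}. v $ (js!p))"
      by (rule prod.cong) auto
    ultimately show "?h (?j a) = ?g a"
      using m l a by (simp add: mult_ac)
  qed (use m in \<open>auto simp: lenset_def\<close>)
  also have "\<dots> = (\<Sum>js\<in>lenset r. \<Sum>a\<in>UNIV. G a (js!m) * T js * (v $ a * (\<Prod>p\<in>{..<r}-{m}. v $ (js!p))))"
    by (simp add: sum.cartesian_product)
  also have "\<dots> = (\<Sum>js\<in>lenset r. T js * ((\<chi> l. \<Sum>a\<in>UNIV. G a l * v$a) $ (js!m) * (\<Prod>p\<in>{..<r}-{m}. v $ (js!p))))"
    by (rule sum.cong) (simp_all add: sum_distrib_left sum_distrib_right mult_ac)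
  finally show ?thesis .
qed

lemma ev_Gamma:
  fixes T :: "'n::finite list \<Rightarrow> real"
  shows "ev r (\<lambda>js. \<Sum>m<length js. \<Sum>l\<in>UNIV. G (js!m) l * T (js[m:=l])) v = Dev r T v (\<chi> l. \<Sum>a\<in>UNIV. G a l * v$a)"
proof -
  have "ev r (\<lambda>js. \<Sum>m<length js. \<Sum>l\<in>UNIV. G (js!m) l * T (js[m:=l])) v
     = (\<Sum>js\<in>lenset r. \<Sum>m<r. \<Sum>l\<in>UNIV. G (js!m) l * T (js[m:=l]) * (\<Prod>p<r. v $ (js!p)))"
    unfolding ev_def by (rule sum.cong) (auto simp: lenset_def sum_distrib_right)
  also have "\<dots> = (\<Sum>m<r. \<Sum>js\<in>lenset r. \<Sum>l\<in>UNIV. G (js!m) l * T (js[m:=l]) * (\<Prod>p<r. v $ (js!p)))"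
    by (rule sum.swap)
  also have "\<dots> = (\<Sum>m<r. \<Sum>js\<in>lenset r. T js * ((\<chi> l. \<Sum>a\<in>UNIV. G a l * v$a) $ (js!m) * (\<Prod>p\<in>{..<r}-{m}. v $ (js!p))))"
    by (rule sum.cong) (simp_all add: ev_Gamma_m)
  also have "\<dots> = Dev r T v (\<chi> l. \<Sum>a\<in>UNIV. G a l * v$a)"
    unfolding Dev_def by (subst sum.swap) (simp add: sum_distrib_left)
  finally show ?thesis .
qed

definition contr :: "real^'n \<Rightarrow> ('n::finite list \<Rightarrow> real) \<Rightarrow> 'n list \<Rightarrow> real" where
  "contr u B js = (\<Sum>a\<in>UNIV. u $ a * B (a # js))"

lemma sum_lenset_Suc:
  fixes F :: "'n::finite list \<Rightarrow> real"
  shows "sum F (lenset (Suc r)) = (\<Sum>a\<in>UNIV. \<Sum>js\<in>lenset r. F (a # js))"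
proof -
  have "sum F (lenset (Suc r)) = (\<Sum>(a,js)\<in>UNIV \<times> lenset r. F (a # js))"
    by (rule sum.reindex_bij_witness[where j="\<lambda>js. (hd js, tl js)" and i="\<lambda>(a,js). a # js"])
       (auto simp: lenset_def length_Suc_conv)
  then show ?thesis by (simp add: sum.cartesian_product)
qed

lemma sum_lenset_perm:
  fixes F :: "'n::finite list \<Rightarrow> real"
  assumes s: "\<sigma> permutes {..<r}"
  shows "(\<Sum>js\<in>lenset r. F (perm_idx r \<sigma> js)) = sum F (lenset r)"
  by (rule sum.reindex_bij_witness[where i="perm_idx r (inv \<sigma>)" and j="perm_idx r \<sigma>"])
    (use s permutes_inverses[OF s] permutes_in_image[OF s] permutes_in_image[OF permutes_inv[OF s]] in
      \<open>auto simp: lenset_def intro!: nth_equalityI\<close>)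

lemma lift_perm:
  assumes s: "\<sigma> permutes {..<r}"
  shows "(\<lambda>i. if i = 0 then 0 else Suc (\<sigma> (i - 1))) permutes {..<Suc r}"
proof (rule bij_imp_permutes)
  let ?f = "\<lambda>i. if i = 0 then 0 else Suc (\<sigma> (i - 1))"
  let ?g = "\<lambda>i. if i = 0 then 0 else Suc (inv \<sigma> (i - 1))"
  show "bij_betw ?f {..<Suc r} {..<Suc r}"
    by (rule bij_betw_byWitness[where f'="?g"])
      (use s permutes_inverses[OF s] permutes_in_image[OF s] permutes_in_image[OF permutes_inv[OF s]] in auto)
  show "\<And>x. x \<notin> {..<Suc r} \<Longrightarrow> ?f x = x"
    using permutes_not_in[OF s] by auto
qed

lemma contr_sym:
  assumes "symmetric_tensor (Suc r) B"
  shows "symmetric_tensor r (contr u B)"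
  unfolding symmetric_tensor_def
proof (intro allI impI)
  fix js :: "'a list" and \<sigma> assume l: "length js = r" and s: "\<sigma> permutes {..<r}"
  let ?f = "\<lambda>i. if i = 0 then 0 else Suc (\<sigma> (i - 1))"
  have "a # perm_idx r \<sigma> js = perm_idx (Suc r) ?f (a # js)" for a
    by (rule nth_equalityI) (auto simp: nth_Cons split: nat.splits)
  then have "B (a # perm_idx r \<sigma> js) = B (a # js)" for a
    using assms lift_perm[OF s] l unfolding symmetric_tensor_def by (metis length_Cons)
  then show "contr u B (perm_idx r \<sigma> js) = contr u B js" by (simp add: contr_def)
qed

lemma transp_bij: "m < (n::nat) \<Longrightarrow> bij_betw (Transposition.transpose 0 m) ({..<n}-{m}) ({..<n}-{0})"
  apply (rule bij_betw_byWitness[where f'="Transposition.transpose 0 m"])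
  apply (simp_all add: Transposition.transpose_def)
  apply auto
  done

lemma Dev_sym:
  fixes B :: "'n::finite list \<Rightarrow> real"
  assumes symB: "symmetric_tensor (Suc r) B"
  shows "Dev (Suc r) B v u = real (Suc r) * ev r (contr u B) v"
proof -
  define S where "S = {..<Suc r}"
  define Tm where "Tm m = (\<Sum>js\<in>lenset (Suc r). B js * (u $ (js!m) * (\<Prod>p\<in>S-{m}. v $ (js!p))))" for m
  have D: "Dev (Suc r) B v u = (\<Sum>m<Suc r. Tm m)"
    unfolding Dev_def Tm_def S_def by (subst sum.swap) (simp only: sum_distrib_left)
  have T0: "Tm m = Tm 0" if m: "m < Suc r" for m
  proof -
    let ?t = "Transposition.transpose 0 m"
    have tp: "?t permutes S" using m by (auto simp: S_def intro!: permutes_swap_id)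
    have "Tm m = (\<Sum>js\<in>lenset (Suc r). B (perm_idx (Suc r) ?t js) * (u $ ((perm_idx (Suc r) ?t js)!m) * (\<Prod>p\<in>S-{m}. v $ ((perm_idx (Suc r) ?t js)!p))))"
      unfolding Tm_def by (rule sym, rule sum_lenset_perm[OF tp[unfolded S_def], of "\<lambda>js. B js * (u $ (js!m) * (\<Prod>p\<in>S-{m}. v $ (js!p)))"])
    also have "\<dots> = Tm 0"
      unfolding Tm_def
    proof (rule sum.cong[OF refl])
      fix js :: "'n list" assume js: "js \<in> lenset (Suc r)"
      have "B (perm_idx (Suc r) ?t js) = B js"
        using symB[unfolded symmetric_tensor_def, rule_format, of js ?t] tp js unfolding S_def lenset_def by simp
      moreover have "(perm_idx (Suc r) ?t js)!m = js ! 0" using m by (simp only: perm_idx_nth transpose_apply_second)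
      moreover have "(\<Prod>p\<in>S-{m}. v $ ((perm_idx (Suc r) ?t js)!p)) = (\<Prod>p\<in>S-{m}. v $ (js ! ?t p))"
        by (rule prod.cong) (simp_all add: S_def)
      moreover have "\<dots> = (\<Prod>p\<in>S-{0}. v $ (js ! p))"
        by (rule prod.reindex_bij_betw) (use transp_bij[OF m] in \<open>simp add: S_def\<close>)
      ultimately show "B (perm_idx (Suc r) ?t js) * (u $ ((perm_idx (Suc r) ?t js)!m) * (\<Prod>p\<in>S-{m}. v $ ((perm_idx (Suc r) ?t js)!p)))
          = B js * (u $ (js!0) * (\<Prod>p\<in>S-{0}. v $ (js!p)))" by (simp only:)
    qed
    finally show ?thesis .
  qed
  have S0: "S - {0} = Suc ` {..<r}"
    unfolding S_def apply (auto simp: image_iff)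
    by (metis Suc_less_eq lessThan_iff not0_implies_Suc)
  have "Tm 0 = (\<Sum>a\<in>UNIV. \<Sum>js\<in>lenset r. B (a # js) * (u $ a * (\<Prod>p<r. v $ (js!p))))"
    unfolding Tm_def sum_lenset_Suc S0 by (simp add: prod.reindex)
  also have "\<dots> = ev r (contr u B) v"
  proof -
    have "ev r (contr u B) v = (\<Sum>js\<in>lenset r. \<Sum>a\<in>UNIV. u $ a * B (a # js) * (\<Prod>p<r. v $ (js!p)))"
      unfolding ev_def contr_def by (simp only: sum_distrib_right)
    also have "\<dots> = (\<Sum>a\<in>UNIV. \<Sum>js\<in>lenset r. u $ a * B (a # js) * (\<Prod>p<r. v $ (js!p)))"
      by (rule sum.swap)
    also have "\<dots> = (\<Sum>a\<in>UNIV. \<Sum>js\<in>lenset r. B (a # js) * (u $ a * (\<Prod>p<r. v $ (js!p))))"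
      by (intro sum.cong refl) (simp add: ac_simps)
    finally show ?thesis by (rule sym)
  qed
  finally have E: "Tm 0 = ev r (contr u B) v" .
  have "(\<Sum>m<Suc r. Tm m) = (\<Sum>m<Suc r. Tm 0)"
    by (rule sum.cong[OF refl]) (rule T0, simp)
  then show ?thesis using D E by simp
qed

lemma sym_zero:
  fixes B :: "'n::finite list \<Rightarrow> real"
  assumes "symmetric_tensor r B" "open W" "v0 \<in> W" "\<And>v. v \<in> W \<Longrightarrow> ev r B v = 0" "length js = r"
  shows "B js = 0"
  using assms
proof (induction r arbitrary: B js)
  case 0
  have l0: "lenset 0 = {[]}" by (auto simp: lenset_def)
  have "ev 0 B v0 = B []" unfolding ev_def l0 by simp
  with 0(4)[OF 0(3)] have "B [] = 0" by simp
  then show ?case using 0(5) by simp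
next
  case (Suc r)
  have cz: "ev r (contr u B) v = 0" if v: "v \<in> W" for u v
  proof -
    have op: "open ((\<lambda>t. v + t *\<^sub>R u) -` W)"
      by (rule continuous_open_vimage[OF Suc.prems(2)]) (intro continuous_intros)
    have ev0: "eventually (\<lambda>t. ev (Suc r) B (v + t *\<^sub>R u) = 0) (nhds 0)"
      unfolding eventually_nhds using op v Suc.prems(4) by (intro exI[of _ "(\<lambda>t. v + t *\<^sub>R u) -` W"]) auto
    have "((\<lambda>t. ev (Suc r) B (v + t *\<^sub>R u)) has_real_derivative 0) (at 0)"
      using DERIV_cong_ev[OF refl ev0 refl, of 0] by simp
    moreover have "((\<lambda>t. ev (Suc r) B (v + t *\<^sub>R u)) has_real_derivative real (Suc r) * ev r (contr u B) v) (at 0)"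
      using ev_deriv[of "Suc r" B v u] Dev_sym[OF Suc.prems(1)] by simp
    ultimately have "real (Suc r) * ev r (contr u B) v = 0" using DERIV_unique by blast
    then show ?thesis by simp
  qed
  obtain a js' where js: "js = a # js'" and l: "length js' = r" using Suc.prems(5) by (auto simp: length_Suc_conv)
  have "contr (axis a 1) B js' = 0"
    by (rule Suc.IH[OF contr_sym[OF Suc.prems(1)] Suc.prems(2,3) cz l])
  moreover have "contr (axis a 1) B js' = B (a # js')"
    unfolding contr_def axis_def by (simp add: if_distrib[where f="\<lambda>x. x * _"] cong: if_cong)
  ultimately show ?case using js by simp
qed


lemma pd_lemma:
  fixes f :: "real^'n \<Rightarrow> real"
  assumes "(f has_derivative Df) (at x)"
  shows "((\<lambda>t. f (x + t *\<^sub>R axis i 1)) has_real_derivative Df (axis i 1)) (at 0)"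
proof -
  have l: "((\<lambda>t. x + t *\<^sub>R axis i 1) has_derivative (\<lambda>h. h *\<^sub>R axis i 1)) (at (0::real))"
    by (auto intro!: derivative_eq_intros)
  have "(f has_derivative Df) (at (x + (0::real) *\<^sub>R axis i 1))" using assms by simp
  from diff_chain_at[OF l this]
  have d: "((\<lambda>t. f (x + t *\<^sub>R axis i 1)) has_derivative (\<lambda>h. Df (h *\<^sub>R axis i 1))) (at 0)"
    by (simp add: comp_def)
  have lin: "linear Df" using assms has_derivative_linear by blast
  show ?thesis
    by (rule has_derivative_imp_has_field_derivative[OF d]) (simp add: linear_scale[OF lin])
qed

lemma ev_sq_deriv:
  fixes T :: "'n::finite list \<Rightarrow> real"
  shows "Dev (2*k) (Sym (2*k) (tensor_prod k T T)) v w = 2 * ev k T v * Dev k T v w"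
proof -
  have h1: "((\<lambda>t. ev (2*k) (Sym (2*k) (tensor_prod k T T)) (v + t *\<^sub>R w)) has_real_derivative Dev (2*k) (Sym (2*k) (tensor_prod k T T)) v w) (at 0)"
    by (rule ev_deriv)
  have h2: "((\<lambda>t. ev k T (v + t *\<^sub>R w) * ev k T (v + t *\<^sub>R w)) has_real_derivative
      ev k T (v + 0 *\<^sub>R w) * Dev k T v w + Dev k T v w * ev k T (v + 0 *\<^sub>R w)) (at 0)"
    by (intro DERIV_mult' ev_deriv)
  have e: "(\<lambda>t. ev (2*k) (Sym (2*k) (tensor_prod k T T)) (v + t *\<^sub>R w)) = (\<lambda>t. ev k T (v + t *\<^sub>R w) * ev k T (v + t *\<^sub>R w))"
    by (simp add: ev_Sym ev_tprod)
  have "Dev (2*k) (Sym (2*k) (tensor_prod k T T)) v w = ev k T (v + 0 *\<^sub>R w) * Dev k T v w + Dev k T v w * ev k T (v + 0 *\<^sub>R w)"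
    using h1 h2 unfolding e by (rule DERIV_unique)
  then show ?thesis by simp
qed

theorem mainTheorem5:
  fixes U :: "(real^'n) set"
    and \<Gamma> :: "real^'n \<Rightarrow> 'n \<Rightarrow> 'n \<Rightarrow> 'n \<Rightarrow> real"
    and A :: "real^'n \<Rightarrow> 'n list \<Rightarrow> real"
    and k :: nat
  assumes "open U"
    and A_C2: "\<And>js. C2_on U (\<lambda>x. A x js)"
    and A_sym: "\<And>x. x \<in> U \<Longrightarrow> symmetric_tensor k (A x)"
    and A_nonvanishing: "\<And>x. x \<in> U \<Longrightarrow> \<exists>js. length js = k \<and> A x js \<noteq> 0"
    and par: "\<And>x i js. x \<in> U \<Longrightarrow> length js = 2 * k \<Longrightarrow>
              cov_deriv \<Gamma> (\<lambda>y. Sym (2 * k) (tensor_prod k (A y) (A y))) x i js = 0"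
  shows "\<forall>x\<in>U. \<forall>i js. length js = k \<longrightarrow> cov_deriv \<Gamma> A x i js = 0"
proof (intro ballI allI impI)
  fix x i and js :: "'n list" assume xU: "x \<in> U" and ljs: "length js = k"
  have "\<forall>js. \<exists>Df. \<forall>y\<in>U. ((\<lambda>y. A y js) has_derivative Df y) (at y)"
    using A_C2 unfolding C2_on_def by blast
  then obtain DA where DA: "\<And>js y. y \<in> U \<Longrightarrow> ((\<lambda>y. A y js) has_derivative DA js y) (at y)"
    by metis
  have Dx: "((\<lambda>t. A (x + t *\<^sub>R axis i 1) js) has_real_derivative partial_deriv (\<lambda>y. A y js) i x) (at 0)" for js
  proof -
    have "((\<lambda>t. A (x + t *\<^sub>R axis i 1) js) has_real_derivative DA js x (axis i 1)) (at 0)"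
      by (rule pd_lemma[OF DA[OF xU]])
    moreover then have "partial_deriv (\<lambda>y. A y js) i x = DA js x (axis i 1)"
      unfolding partial_deriv_def by (rule DERIV_imp_deriv)
    ultimately show ?thesis by simp
  qed
  have opT: "open ((\<lambda>t::real. x + t *\<^sub>R axis i 1) -` U)"
    by (rule continuous_open_vimage[OF \<open>open U\<close>]) (intro continuous_intros)
  have evU: "eventually (\<lambda>t::real. x + t *\<^sub>R axis i 1 \<in> U) (nhds 0)"
    unfolding eventually_nhds using opT xU by (intro exI[of _ "(\<lambda>t::real. x + t *\<^sub>R axis i 1) -` U"]) auto
  define B where "B = cov_deriv \<Gamma> A x i"
  have symB: "symmetric_tensor k B"
    unfolding symmetric_tensor_def
  proof (intro allI impI)
    fix ks :: "'n list" and \<sigma> assume lks: "length ks = k" and s: "\<sigma> permutes {..<k}"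
    have ev1: "eventually (\<lambda>t. A (x + t *\<^sub>R axis i 1) (perm_idx k \<sigma> ks) = A (x + t *\<^sub>R axis i 1) ks) (nhds 0)"
      using evU by eventually_elim (use A_sym lks s in \<open>auto simp: symmetric_tensor_def\<close>)
    have "((\<lambda>t. A (x + t *\<^sub>R axis i 1) ks) has_real_derivative partial_deriv (\<lambda>y. A y (perm_idx k \<sigma> ks)) i x) (at 0)"
      using DERIV_cong_ev[OF refl ev1 refl] Dx[of "perm_idx k \<sigma> ks"] by simp
    then have pd: "partial_deriv (\<lambda>y. A y (perm_idx k \<sigma> ks)) i x = partial_deriv (\<lambda>y. A y ks) i x"
      using Dx[of ks] DERIV_unique by blast
    have upd: "A x ((perm_idx k \<sigma> ks)[m := l]) = A x (ks[\<sigma> m := l])" if m: "m < k" for m l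
    proof -
      have "(perm_idx k \<sigma> ks)[m := l] = perm_idx k \<sigma> (ks[\<sigma> m := l])"
      proof (rule nth_equalityI)
        show "length ((perm_idx k \<sigma> ks)[m := l]) = length (perm_idx k \<sigma> (ks[\<sigma> m := l]))" by simp
        fix p assume "p < length ((perm_idx k \<sigma> ks)[m := l])"
        then have p: "p < k" by simp
        have "\<sigma> p < k" "\<sigma> m < k" using p m permutes_in_image[OF s] by auto
        moreover have "(\<sigma> p = \<sigma> m) = (p = m)" using inj_eq[OF permutes_inj[OF s]] by blast
        ultimately show "(perm_idx k \<sigma> ks)[m := l] ! p = perm_idx k \<sigma> (ks[\<sigma> m := l]) ! p"
          using p m lks by (auto simp add: nth_list_update)
      qed
      then show ?thesis using A_sym[OF xU] s lks unfolding symmetric_tensor_def by simp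
    qed
    have "(\<Sum>m<length (perm_idx k \<sigma> ks). \<Sum>l\<in>UNIV. \<Gamma> x i (perm_idx k \<sigma> ks ! m) l * A x ((perm_idx k \<sigma> ks)[m := l]))
        = (\<Sum>m<k. \<Sum>l\<in>UNIV. \<Gamma> x i (ks ! \<sigma> m) l * A x (ks[\<sigma> m := l]))"
      by (rule sum.cong) (simp_all add: upd)
    also have "\<dots> = (\<Sum>m<k. \<Sum>l\<in>UNIV. \<Gamma> x i (ks ! m) l * A x (ks[m := l]))"
      using sum.permute[OF s, of "\<lambda>m. \<Sum>l\<in>UNIV. \<Gamma> x i (ks ! m) l * A x (ks[m := l])"] by (simp add: comp_def)
    finally show "B (perm_idx k \<sigma> ks) = B ks"
      unfolding B_def cov_deriv_def using pd lks by simp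
  qed
  define P where "P = ev k (A x)"
  define S where "S = (\<lambda>y. Sym (2 * k) (tensor_prod k (A y) (A y)))"
  have key: "ev (2*k) (cov_deriv \<Gamma> S x i) v = 2 * P v * ev k B v" for v
  proof -
    let ?w = "\<chi> l. \<Sum>a\<in>UNIV. \<Gamma> x i a l * v$a"
    let ?a' = "\<lambda>js. partial_deriv (\<lambda>y. A y js) i x"
    have cdS: "ev (2*k) (cov_deriv \<Gamma> S x i) v = ev (2*k) (\<lambda>js. partial_deriv (\<lambda>y. S y js) i x) v
        - ev (2*k) (\<lambda>js. \<Sum>m<length js. \<Sum>l\<in>UNIV. \<Gamma> x i (js!m) l * S x (js[m:=l])) v"
      unfolding cov_deriv_def by (rule ev_diff)
    have cdA: "ev k B v = ev k ?a' v
        - ev k (\<lambda>js. \<Sum>m<length js. \<Sum>l\<in>UNIV. \<Gamma> x i (js!m) l * A x (js[m:=l])) v"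
      unfolding B_def cov_deriv_def by (rule ev_diff)
    have p2: "ev (2*k) (\<lambda>js. \<Sum>m<length js. \<Sum>l\<in>UNIV. \<Gamma> x i (js!m) l * S x (js[m:=l])) v
        = 2 * P v * ev k (\<lambda>js. \<Sum>m<length js. \<Sum>l\<in>UNIV. \<Gamma> x i (js!m) l * A x (js[m:=l])) v"
      unfolding ev_Gamma S_def P_def by (rule ev_sq_deriv)
    have hS: "((\<lambda>t. S (x + t *\<^sub>R axis i 1) js) has_real_derivative partial_deriv (\<lambda>y. S y js) i x) (at 0)" for js
    proof -
      have "\<exists>D. ((\<lambda>t. S (x + t *\<^sub>R axis i 1) js) has_real_derivative D) (at 0)"
        unfolding S_def Sym_def tensor_prod_def
        by (rule exI, rule DERIV_cmult, rule DERIV_sum, rule DERIV_mult', rule Dx, rule Dx)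
      then obtain D where D: "((\<lambda>t. S (x + t *\<^sub>R axis i 1) js) has_real_derivative D) (at 0)" by blast
      moreover from D have "partial_deriv (\<lambda>y. S y js) i x = D"
        unfolding partial_deriv_def by (rule DERIV_imp_deriv)
      ultimately show ?thesis by simp
    qed
    have d1: "((\<lambda>t. ev (2*k) (S (x + t *\<^sub>R axis i 1)) v) has_real_derivative ev (2*k) (\<lambda>js. partial_deriv (\<lambda>y. S y js) i x) v) (at 0)"
      by (rule ev_sum_deriv[OF hS])
    have d2: "((\<lambda>t. ev k (A (x + t *\<^sub>R axis i 1)) v * ev k (A (x + t *\<^sub>R axis i 1)) v) has_real_derivative
        ev k (A (x + 0 *\<^sub>R axis i 1)) v * ev k ?a' v + ev k ?a' v * ev k (A (x + 0 *\<^sub>R axis i 1)) v) (at 0)"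
      by (intro DERIV_mult' ev_sum_deriv Dx)
    have e: "(\<lambda>t. ev (2*k) (S (x + t *\<^sub>R axis i 1)) v) = (\<lambda>t. ev k (A (x + t *\<^sub>R axis i 1)) v * ev k (A (x + t *\<^sub>R axis i 1)) v)"
      by (simp add: S_def ev_Sym ev_tprod)
    have p1: "ev (2*k) (\<lambda>js. partial_deriv (\<lambda>y. S y js) i x) v = ev k (A (x + 0 *\<^sub>R axis i 1)) v * ev k ?a' v + ev k ?a' v * ev k (A (x + 0 *\<^sub>R axis i 1)) v"
      using d1 d2 unfolding e by (rule DERIV_unique)
    show ?thesis
      unfolding cdS cdA p2 p1 by (simp add: P_def algebra_simps)
  qed
  have zero: "ev (2*k) (cov_deriv \<Gamma> S x i) v = 0" for v
    unfolding ev_def by (rule sum.neutral) (auto simp: lenset_def S_def par[OF xU])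
  have PB: "P v = 0 \<or> ev k B v = 0" for v
    using key[of v] zero[of v] by simp
  obtain v0 where v0: "P v0 \<noteq> 0"
  proof (rule ccontr)
    assume "\<not> thesis"
    then have "\<forall>v. P v = 0" using that by blast
    then have "\<forall>js. length js = k \<longrightarrow> A x js = 0"
      using sym_zero[OF A_sym[OF xU] open_UNIV UNIV_I] unfolding P_def by blast
    then show False using A_nonvanishing[OF xU] by blast
  qed
  have opW: "open {v. P v \<noteq> 0}"
    by (rule open_Collect_neq) (auto simp: P_def ev_cont)
  have "B js = 0"
    by (rule sym_zero[OF symB opW, of v0 js]) (use v0 PB ljs in auto)
  then show "cov_deriv \<Gamma> A x i js = 0" by (simp add: B_def)
qed

end
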